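(* The momentum map $F=(L,H)$ of the $b$-coupled spin-oscillator restricted to either open half $M^+=\{z>0\}\times\mathbb R^2$ or $M^-=\{z<0\}\times\mathbb R^2$ is surjective onto $\mathbb R^2$.
   Context: Fix constants $\rho_1,\rho_2>0$. Let $S^2\subset\mathbb R^3$ be the unit sphere with coordinates $(x,y,z)$, $x^2+y^2+z^2=1$, and $(u,v)$ coordinates on $\mathbb R^2$; $M=S^2\times\mathbb R^2$. The $b$-coupled spin-oscillator momentum map is $F=(L,H)$ with $L=\rho_1\log|z|+\frac{\rho_2}{2}(u^2+v^2)$ and $H=\frac12(xu+yv)$; on $M^{\pm}$ it is a smooth integrable system for the symplectic form $-\rho_1\frac{1}{1-x^2-y^2}dx\wedge dy+\rho_2\,du\wedge dv$ (in coordinates $(x,y,u,v)$). *)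

theory Defs
  imports "HOL-Analysis.Analysis"
begin

definition spin_osc_M_plus :: "(real \<times> real \<times> real \<times> real \<times> real) set" where
  "spin_osc_M_plus = {(x,y,z,u,v). x^2 + y^2 + z^2 = 1 \<and> z > 0}"

definition spin_osc_M_minus :: "(real \<times> real \<times> real \<times> real \<times> real) set" where
  "spin_osc_M_minus = {(x,y,z,u,v). x^2 + y^2 + z^2 = 1 \<and> z < 0}"

definition spin_osc_F :: "real \<Rightarrow> real \<Rightarrow> real \<times> real \<times> real \<times> real \<times> real \<Rightarrow> real \<times> real" where
  "spin_osc_F r1 r2 p = (case p of (x,y,z,u,w) \<Rightarrow>
     (r1 * ln (abs z) + (r2 / 2) * (u^2 + w^2), (x*u + y*w) / 2))"

end

theory Submission
  imports Defs
begin

lemma preim: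
  fixes r1 r2 a b :: real and sg :: real
  assumes r1: "r1 > 0" and r2: "r2 > 0" and sg: "sg = 1 \<or> sg = -1"
  shows "\<exists>x y z u w. x^2 + y^2 + z^2 = 1 \<and> sg * z > 0 \<and>
     spin_osc_F r1 r2 (x,y,z,u,w) = (a,b)"
proof -
  define K where "K = 1 + (\<bar>a\<bar> + 8 * r2 * b^2) / r1"
  have K1: "K \<ge> 1" using r1 r2 unfolding K_def by (simp add: add_nonneg_nonneg)
  define z0 where "z0 = exp (- K)"
  have z0p: "z0 > 0" unfolding z0_def by simp
  have "exp K \<ge> 1 + K" by (rule exp_ge_add_one_self)
  hence eK: "exp K \<ge> 2" using K1 by linarith
  have "z0 = 1 / exp K" unfolding z0_def by (simp add: exp_minus field_simps)
  also have "\<dots> \<le> 1 / 2" using eK by (intro divide_left_mono) auto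
  finally have z0h: "z0 \<le> 1/2" .
  have z0sq: "z0^2 \<le> (1/2)^2" using z0h z0p by (intro power_mono) auto
  define r where "r = sqrt (1 - z0^2)"
  have "z0^2 \<le> 1" using z0sq by (simp add: power2_eq_square)
  hence rsq: "r^2 = 1 - z0^2" unfolding r_def by simp
  have r2ge: "r^2 \<ge> 3/4" using rsq z0sq by (simp add: power2_eq_square)
  have rpos: "r > 0" unfolding r_def using z0sq by (simp add: power2_eq_square)
  define s where "s = 2 * b / r"
  have s2: "s^2 \<le> 8 * b^2"
  proof -
    have "s^2 = 4 * b^2 / r^2" unfolding s_def by (simp add: power_divide power_mult_distrib)
    also have "\<dots> \<le> 4 * b^2 / (3/4)" by (rule divide_left_mono) (use r2ge in auto)
    finally have "s^2 * 3 \<le> 16 * b^2" by simp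
    thus ?thesis using zero_le_power2[of b] by linarith
  qed
  define q where "q = (2/r2) * (a + r1 * K) - s^2"
  have "a + r1 * K = a + r1 + \<bar>a\<bar> + 8 * r2 * b^2" unfolding K_def using r1 by (simp add: field_simps)
  hence aK: "a + r1 * K \<ge> 8 * r2 * b^2" using r1 by linarith
  have "(2/r2) * (a + r1 * K) \<ge> (2/r2) * (8 * r2 * b^2)" using aK r2 by (intro mult_left_mono) auto
  hence "(2/r2) * (a + r1 * K) \<ge> 16 * b^2" using r2 by simp
  hence q0: "q \<ge> 0" unfolding q_def using s2 zero_le_power2[of b] by linarith
  define w where "w = sqrt q"
  have w2: "w^2 = q" unfolding w_def using q0 by simp
  have lnz: "ln \<bar>sg * z0\<bar> = - K" using sg z0p unfolding z0_def by auto
  have L: "r1 * ln \<bar>sg * z0\<bar> + r2 / 2 * (s^2 + w^2) = a"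
    using lnz w2 r2 unfolding q_def by (simp add: field_simps)
  have H: "(r * s + 0 * w) / 2 = b" unfolding s_def using rpos by simp
  show ?thesis
    apply (rule exI[of _ r], rule exI[of _ 0], rule exI[of _ "sg * z0"], rule exI[of _ s], rule exI[of _ w])
    using L H rsq sg z0p by (auto simp: spin_osc_F_def power_mult_distrib)
qed

theorem corollary4p7:
  fixes \<rho>1 \<rho>2 :: real
  assumes "\<rho>1 > 0" and "\<rho>2 > 0"
  shows "spin_osc_F \<rho>1 \<rho>2 ` spin_osc_M_plus = UNIV
       \<and> spin_osc_F \<rho>1 \<rho>2 ` spin_osc_M_minus = UNIV"
proof -
  have "(a,b) \<in> spin_osc_F \<rho>1 \<rho>2 ` spin_osc_M_plus \<and> (a,b) \<in> spin_osc_F \<rho>1 \<rho>2 ` spin_osc_M_minus" for a b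
  proof
    obtain x y z u w where "x^2 + y^2 + z^2 = 1" "1 * z > 0" "spin_osc_F \<rho>1 \<rho>2 (x,y,z,u,w) = (a,b)"
      using preim[OF assms, of 1 a b] by auto
    thus "(a,b) \<in> spin_osc_F \<rho>1 \<rho>2 ` spin_osc_M_plus"
      unfolding spin_osc_M_plus_def by (intro image_eqI[of _ _ "(x,y,z,u,w)"]) auto
  next
    obtain x y z u w where "x^2 + y^2 + z^2 = 1" "-1 * z > 0" "spin_osc_F \<rho>1 \<rho>2 (x,y,z,u,w) = (a,b)"
      using preim[OF assms, of "-1" a b] by auto
    thus "(a,b) \<in> spin_osc_F \<rho>1 \<rho>2 ` spin_osc_M_minus"
      unfolding spin_osc_M_minus_def by (intro image_eqI[of _ _ "(x,y,z,u,w)"]) auto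
  qed
  thus ?thesis by auto
qed

end
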